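(* Let $k \geq \ell \geq 2$, $k \geq 3$, $n > k+\ell$. Suppose $\mathcal F \subset \binom{[n]}{k}$ and $\mathcal G \subset \binom{[2\ell]}{\ell}$ are non-trivial and cross-intersecting. Then $$|\mathcal F| + |\mathcal G| \leq h(n,k,\ell) := \binom{n}{k} - 2\binom{n-\ell}{k} + \binom{n-2\ell}{k} + 2,$$ and the inequality is strict unless $|\mathcal G| = 2$.
   Context: Families are cross-intersecting if every member of one meets every member of the other; a non-empty family is non-trivial if the intersection of all its members is empty. $\binom{[2\ell]}{\ell}$ is the set of $\ell$-subsets of $\{1,\dots,2\ell\}$. *)

theory Defs
  imports Main
begin

definition cross_intersecting :: "'a set set \<Rightarrow> 'a set set \<Rightarrow> bool" where
  "cross_intersecting F G \<longleftrightarrow> (\<forall>A\<in>F. \<forall>B\<in>G. A \<inter> B \<noteq> {})"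

definition non_trivial :: "'a set set \<Rightarrow> bool" where
  "non_trivial F \<longleftrightarrow> F \<noteq> {} \<and> \<Inter> F = {}"

definition h :: "nat \<Rightarrow> nat \<Rightarrow> nat \<Rightarrow> int" where
  "h n k l = int (n choose k) - 2 * int ((n - l) choose k) + int ((n - 2*l) choose k) + 2"

end

theory Submission
  imports Defs
begin

locale pset =
  fixes n k l :: nat and G :: "nat set set" and B1 :: "nat set"
  assumes kl: "k \<ge> l" "l \<ge> 2" "k \<ge> 3" "n > k+l"
  and G: "G \<subseteq> {B. B \<subseteq> {1..2*l} \<and> card B = l}"
  and ntG: "non_trivial G" and B1: "B1 \<in> G"
begin

definition "X = {1..2*l}"
definition "U = {1..n}"
definition "Z = U - X"
definition "Bf e = (SOME B. B \<in> G \<and> e \<notin> B)"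
definition "bet e = (SOME f. bij_betw f (B1 \<inter> Bf e) ((X - B1) - Bf e))"
definition "psitr T = (T - Bf (Min T)) \<union> bet (Min T) ` (T \<inter> Bf (Min T))"
definition "psi A = (A - X) \<union> psitr (A \<inter> X)"

lemma finX: "finite X" "card X = 2*l" "X \<subseteq> U" "finite U" "card U = n"
  "finite Z" "card Z = n - 2*l"
proof -
  show "finite X" "card X = 2*l" "finite U" "card U = n" by (auto simp: X_def U_def)
  show "X \<subseteq> U" using kl by (auto simp: X_def U_def)
  then show "finite Z" "card Z = n - 2*l"
    by (auto simp: Z_def X_def U_def card_Diff_subset)
qed

lemma GB: "B \<in> G \<Longrightarrow> B \<subseteq> X \<and> card B = l \<and> finite B"
  using G finX(1) by (auto simp: X_def intro: finite_subset)

lemma B1p: "B1 \<subseteq> X" "card B1 = l" "finite B1"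
  using GB[OF B1] by auto

lemma Bf: "Bf e \<in> G" "e \<notin> Bf e"
proof -
  have "\<exists>B. B \<in> G \<and> e \<notin> B" using ntG unfolding non_trivial_def by auto
  then show "Bf e \<in> G" "e \<notin> Bf e" unfolding Bf_def by (metis (mono_tags, lifting) someI_ex)+
qed

lemma card_eq: "card (B1 \<inter> Bf e) = card ((X - B1) - Bf e)"
proof -
  obtain B where B: "B = Bf e" by auto
  have Bp: "B \<subseteq> X" "card B = l" "finite B" using GB Bf B by auto
  have "(X - B1) - B = X - (B1 \<union> B)" by auto
  moreover have "card (X - (B1 \<union> B)) = 2*l - card (B1 \<union> B)"
    using Bp B1p finX by (simp add: card_Diff_subset)
  moreover have "card (B1 \<union> B) + card (B1 \<inter> B) = l + l"
    using card_Un_Int[OF B1p(3) Bp(3)] Bp B1p by simp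
  ultimately show ?thesis using B by simp
qed

lemma bet: "bij_betw (bet e) (B1 \<inter> Bf e) ((X - B1) - Bf e)"
proof -
  have "\<exists>f. bij_betw f (B1 \<inter> Bf e) ((X - B1) - Bf e)"
    using finite_same_card_bij[OF _ _ card_eq] B1p finX by auto
  then show ?thesis unfolding bet_def by (metis (mono_tags, lifting) someI_ex)
qed

lemma psitr:
  assumes T: "T \<subseteq> B1" "T \<noteq> {}"
  shows "psitr T \<subseteq> X - Bf (Min T)" "psitr T \<inter> B1 = T - Bf (Min T)"
    "card (psitr T) = card T" "Min T \<in> psitr T \<inter> B1" "Min (psitr T \<inter> B1) = Min T"
    "psitr T \<inter> (X - B1) = bet (Min T) ` (T \<inter> Bf (Min T))"
proof -
  define e where "e = Min T"
  define B where "B = Bf e"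
  have fT: "finite T" using T B1p finite_subset by blast
  have eT: "e \<in> T" using fT T e_def by simp
  have eB: "e \<notin> B" using Bf B_def by simp
  have bij: "bij_betw (bet e) (B1 \<inter> B) ((X - B1) - B)" using bet B_def by simp
  have im: "bet e ` (T \<inter> B) \<subseteq> (X - B1) - B" using bij T unfolding bij_betw_def by blast
  have ps: "psitr T = (T - B) \<union> bet e ` (T \<inter> B)" unfolding psitr_def e_def B_def by simp
  show p1: "psitr T \<subseteq> X - Bf (Min T)" using ps im T B1p unfolding e_def[symmetric] B_def[symmetric] by auto
  show p2: "psitr T \<inter> B1 = T - Bf (Min T)" using ps im T unfolding e_def[symmetric] B_def[symmetric] by auto
  show "psitr T \<inter> (X - B1) = bet (Min T) ` (T \<inter> Bf (Min T))"
    using ps im T B1p unfolding e_def[symmetric] B_def[symmetric] by auto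
  have inj: "inj_on (bet e) (T \<inter> B)" using bij T unfolding bij_betw_def by (meson inf_mono inj_on_subset order_refl)
  have "card (psitr T) = card (T - B) + card (bet e ` (T \<inter> B))"
    unfolding ps by (rule card_Un_disjoint) (use fT im T in auto)
  also have "\<dots> = card (T - B) + card (T \<inter> B)" using card_image[OF inj] by simp
  also have "\<dots> = card T" using fT by (metis card_Diff_subset_Int add.commute card_Int_Diff) 
  finally show "card (psitr T) = card T" .
  show p4: "Min T \<in> psitr T \<inter> B1" using p2 eT eB T unfolding e_def B_def by auto
  show "Min (psitr T \<inter> B1) = Min T"
  proof (rule Min_eqI)
    show "finite (psitr T \<inter> B1)" using B1p by auto
    show "Min T \<in> psitr T \<inter> B1" by (fact p4)
    fix y assume "y \<in> psitr T \<inter> B1" then have "y \<in> T" using p2 by auto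
    then show "Min T \<le> y" using fT by simp
  qed
qed

lemma psitr_inj: "inj_on psitr {T. T \<subseteq> B1 \<and> T \<noteq> {}}"
proof (rule inj_onI)
  fix T T' assume T: "T \<in> {T. T \<subseteq> B1 \<and> T \<noteq> {}}" and T': "T' \<in> {T. T \<subseteq> B1 \<and> T \<noteq> {}}"
    and eq: "psitr T = psitr T'"
  have m: "Min T = Min T'" using psitr(5)[of T] psitr(5)[of T'] T T' eq by auto
  have a: "T - Bf (Min T) = T' - Bf (Min T)" using psitr(2)[of T] psitr(2)[of T'] T T' eq m by auto
  have "bet (Min T) ` (T \<inter> Bf (Min T)) = bet (Min T) ` (T' \<inter> Bf (Min T))"
    using psitr(6)[of T] psitr(6)[of T'] T T' eq m by auto
  moreover have "inj_on (bet (Min T)) (B1 \<inter> Bf (Min T))" using bet bij_betw_def by blast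
  ultimately have b: "T \<inter> Bf (Min T) = T' \<inter> Bf (Min T)"
    using T T' by (simp add: inj_on_image_eq_iff) (metis inf_mono inj_on_image_eq_iff order_refl)
  show "T = T'" using a b by blast
qed

lemma psitr_B1: "psitr B1 = X - Bf (Min B1)"
proof -
  have ne: "B1 \<noteq> {}" using B1p kl by auto
  have "card (X - Bf (Min B1)) = l" using GB[OF Bf(1)] finX by (simp add: card_Diff_subset)
  then show ?thesis using psitr(1,3)[OF order_refl ne] B1p finX
    by (metis card_subset_eq finite_Diff)
qed

definition "K = {A. A \<subseteq> U \<and> card A = k}"
definition "D S = {A \<in> K. A \<inter> S = {}}"
definition "Bad = {A \<in> K. \<exists>B\<in>G. A \<inter> B = {}}"
definition "Q = {A \<in> K. A \<inter> (X - B1) = {} \<and> A \<inter> B1 \<noteq> {}}"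

lemma finK: "finite K" "card K = n choose k"
proof -
  have "K \<subseteq> Pow U" unfolding K_def by auto
  then show "finite K" using finX finite_subset by blast
  show "card K = n choose k" unfolding K_def using n_subsets[OF finX(4)] finX by simp
qed

lemma card_D: assumes "S \<subseteq> U" shows "card (D S) = (n - card S) choose k"
proof -
  have "D S = {A. A \<subseteq> U - S \<and> card A = k}" unfolding D_def K_def by auto
  moreover have "card (U - S) = n - card S" using assms finX by (simp add: card_Diff_subset finite_subset)
  ultimately show ?thesis using n_subsets[of "U - S" k] finX by simp
qed

lemma card_DB1: "card (D B1) = (n - l) choose k"
  using card_D[of B1] B1p finX by auto

lemma card_Q: "card Q = ((n - l) choose k) - ((n - 2*l) choose k)"
proof -
  have XB: "X - B1 \<subseteq> U" "card (X - B1) = l" using finX B1p by (auto simp: card_Diff_subset)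
  have "Q = D (X - B1) - D X" unfolding Q_def D_def using B1p by auto
  moreover have "D X \<subseteq> D (X - B1)" unfolding D_def by auto
  moreover have "finite (D X)" using finK unfolding D_def by auto
  ultimately have "card Q = card (D (X - B1)) - card (D X)" by (simp add: card_Diff_subset)
  then show ?thesis using card_D[OF XB(1)] card_D[OF finX(3)] XB finX by simp
qed

lemma psiQ:
  assumes A: "A \<in> Q"
  shows "A \<inter> X \<subseteq> B1" "A \<inter> X \<noteq> {}" "psi A \<inter> X = psitr (A \<inter> X)" "psi A - X = A - X"
    "psi A \<in> Bad" "psi A \<inter> B1 \<noteq> {}" "psi A \<in> K" "card (psi A \<inter> X) = card (A \<inter> X)"
proof -
  show T: "A \<inter> X \<subseteq> B1" "A \<inter> X \<noteq> {}" using A B1p unfolding Q_def by auto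
  have sub: "psitr (A \<inter> X) \<subseteq> X - Bf (Min (A \<inter> X))" using psitr(1)[OF T] .
  show i: "psi A \<inter> X = psitr (A \<inter> X)" "psi A - X = A - X" using sub unfolding psi_def by auto
  show "card (psi A \<inter> X) = card (A \<inter> X)" using i psitr(3)[OF T] by simp
  have AK: "A \<subseteq> U" "card A = k" using A unfolding Q_def K_def by auto
  have fA: "finite A" using AK finX finite_subset by blast
  have "psi A \<subseteq> U" unfolding psi_def using AK sub finX by auto
  moreover have "card (psi A) = k"
  proof -
    have "card (psi A) = card (A - X) + card (psitr (A \<inter> X))"
      unfolding psi_def by (rule card_Un_disjoint) (use fA sub finX finite_subset in blast)+
    also have "\<dots> = card (A - X) + card (A \<inter> X)" using psitr(3)[OF T] by simp
    also have "\<dots> = card A" using fA by (metis add.commute card_Int_Diff)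
    finally show ?thesis using AK by simp
  qed
  ultimately show K: "psi A \<in> K" unfolding K_def by auto
  have "psi A \<inter> Bf (Min (A \<inter> X)) = {}" using sub GB[OF Bf(1)] unfolding psi_def by auto
  then show "psi A \<in> Bad" using K Bf(1) unfolding Bad_def by blast
  show "psi A \<inter> B1 \<noteq> {}" using psitr(4)[OF T] i by auto
qed

lemma psi_inj: "inj_on psi Q"
proof (rule inj_onI)
  fix A A' assume A: "A \<in> Q" and A': "A' \<in> Q" and eq: "psi A = psi A'"
  have "A - X = A' - X" using psiQ(4)[OF A] psiQ(4)[OF A'] eq by simp
  moreover have "psitr (A \<inter> X) = psitr (A' \<inter> X)" using psiQ(3)[OF A] psiQ(3)[OF A'] eq by simp
  then have "A \<inter> X = A' \<inter> X"
    by (rule inj_onD[OF psitr_inj]) (use psiQ(1,2)[OF A] psiQ(1,2)[OF A'] in auto)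
  ultimately show "A = A'" by blast
qed

definition "G' = G - {B1, Bf (Min B1)}"
definition "E B = {A \<in> K. A \<inter> X = X - B}"
definition "Xtra = (\<Union>B\<in>G'. E B)"

lemma card_E: assumes B: "B \<in> G" shows "card (E B) \<ge> (n - 2*l) choose (k - l)"
proof -
  define Ws where "Ws = {W. W \<subseteq> Z \<and> card W = k - l}"
  define f where "f W = (X - B) \<union> W" for W
  have Bp: "B \<subseteq> X" "card B = l" "finite B" using GB[OF B] by auto
  have cXB: "card (X - B) = l" using Bp finX by (simp add: card_Diff_subset)
  have cW: "card Ws = (n - 2*l) choose (k - l)" unfolding Ws_def using n_subsets[OF finX(6)] finX by simp
  have "f ` Ws \<subseteq> E B"
  proof
    fix A assume "A \<in> f ` Ws"
    then obtain W where W: "W \<subseteq> Z" "card W = k - l" and A: "A = f W" unfolding Ws_def by auto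
    have WX: "W \<inter> X = {}" using W unfolding Z_def by auto
    have fW: "finite W" using W finX finite_subset by blast
    have "A \<subseteq> U" using A W finX unfolding f_def Z_def by auto
    moreover have "card A = k" using A card_Un_disjoint[of "X - B" W] fW finX WX cXB W kl
      unfolding f_def by auto
    moreover have "A \<inter> X = X - B" using A WX unfolding f_def by auto
    ultimately show "A \<in> E B" unfolding E_def K_def by auto
  qed
  moreover have "inj_on f Ws"
  proof (rule inj_onI)
    fix W W' assume "W \<in> Ws" "W' \<in> Ws" "f W = f W'"
    then show "W = W'" unfolding Ws_def f_def Z_def by blast
  qed
  moreover have "finite (E B)" using finK unfolding E_def by auto
  ultimately show ?thesis using cW card_mono card_image by metis
qed

lemma cardG: "card G \<ge> 2" "finite G"
proof -
  have fG: "finite G" using G finite_subset[of G "Pow X"] finX unfolding X_def by auto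
  then show "finite G" .
  have "Bf (Min B1) \<noteq> B1" using Bf(2) B1p kl by (metis Min_in card.empty not_numeral_le_zero)
  then have "{B1, Bf (Min B1)} \<subseteq> G" "card {B1, Bf (Min B1)} = 2" using B1 Bf(1) by auto
  then show "card G \<ge> 2" using fG card_mono by metis
qed

lemma card_G': "card G' = card G - 2"
proof -
  have "Bf (Min B1) \<noteq> B1" using Bf(2) B1p kl by (metis Min_in card.empty not_numeral_le_zero)
  then have "{B1, Bf (Min B1)} \<subseteq> G" "card {B1, Bf (Min B1)} = 2" using B1 Bf(1) by auto
  then show ?thesis unfolding G'_def using cardG by (simp add: card_Diff_subset)
qed

lemma card_Xtra: "card Xtra \<ge> (card G - 2) * ((n - 2*l) choose (k - l))"
proof -
  have fG': "finite G'" using cardG unfolding G'_def by auto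
  have "card Xtra = (\<Sum>B\<in>G'. card (E B))" unfolding Xtra_def
  proof (rule card_UN_disjoint[OF fG'])
    show "\<forall>i\<in>G'. finite (E i)" using finK unfolding E_def by auto
    show "\<forall>i\<in>G'. \<forall>j\<in>G'. i \<noteq> j \<longrightarrow> E i \<inter> E j = {}"
    proof (intro ballI impI)
      fix i j assume "i \<in> G'" "j \<in> G'" "i \<noteq> j"
      then have "i \<subseteq> X" "j \<subseteq> X" using GB unfolding G'_def by auto
      then have "X - i \<noteq> X - j" using \<open>i \<noteq> j\<close> by blast
      then show "E i \<inter> E j = {}" unfolding E_def by auto
    qed
  qed
  also have "\<dots> \<ge> (\<Sum>B\<in>G'. (n - 2*l) choose (k - l))"
    by (rule sum_mono) (use card_E G'_def in auto)
  finally show ?thesis using card_G' by simp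
qed

lemma Xtra_props: assumes "A \<in> Xtra"
  shows "A \<in> Bad" "A \<inter> B1 \<noteq> {}" "A \<notin> psi ` Q" "card (A \<inter> X) = l"
proof -
  obtain B where B: "B \<in> G" "B \<noteq> B1" "B \<noteq> Bf (Min B1)" and A: "A \<in> K" "A \<inter> X = X - B"
    using assms unfolding Xtra_def G'_def E_def by auto
  have Bp: "B \<subseteq> X" "card B = l" "finite B" using GB[OF B(1)] by auto
  show "A \<in> Bad" using A B Bp unfolding Bad_def by blast
  have "\<not> B1 \<subseteq> B" using B(2) Bp B1p card_subset_eq by metis
  then show "A \<inter> B1 \<noteq> {}" using A B1p by auto
  show cA: "card (A \<inter> X) = l" using A Bp finX by (simp add: card_Diff_subset)
  show "A \<notin> psi ` Q"
  proof
    assume "A \<in> psi ` Q"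
    then obtain A' where A': "A' \<in> Q" "A = psi A'" by auto
    have "card (A' \<inter> X) = l" using psiQ(8)[OF A'(1)] A'(2) cA by simp
    then have "A' \<inter> X = B1" using psiQ(1)[OF A'(1)] B1p card_subset_eq by metis
    then have "A \<inter> X = X - Bf (Min B1)" using psiQ(3)[OF A'(1)] A'(2) psitr_B1 by simp
    then have "X - B = X - Bf (Min B1)" using A by simp
    moreover have "Bf (Min B1) \<subseteq> X" using GB[OF Bf(1)] by simp
    ultimately show False using Bp B(3) by blast
  qed
qed

definition "sub C = (\<lambda>c. C - {c}) ` {c \<in> C. (C - {c}) \<inter> B1 \<noteq> {}}"
definition "Sig = {S. S \<subseteq> X \<and> card S = l - 1 \<and> S \<inter> B1 \<noteq> {} \<and> (\<exists>B\<in>G. S \<inter> B = {})}"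

lemma compl: assumes "B \<in> G" "B \<noteq> B1"
  shows "X - B \<subseteq> X" "card (X - B) = l" "(X - B) \<inter> B1 \<noteq> {}" "finite (X - B)"
proof -
  have Bp: "B \<subseteq> X" "card B = l" "finite B" using GB[OF assms(1)] by auto
  show "X - B \<subseteq> X" "finite (X - B)" using finX by auto
  show "card (X - B) = l" using Bp finX by (simp add: card_Diff_subset)
  have "\<not> B1 \<subseteq> B" using assms(2) Bp B1p card_subset_eq by metis
  then show "(X - B) \<inter> B1 \<noteq> {}" using B1p by auto
qed

lemma sub_card:
  assumes C: "finite C" "card C = l" "C \<inter> B1 \<noteq> {}"
  shows "card (sub C) \<ge> l - 1" "card (C \<inter> B1) \<ge> 2 \<Longrightarrow> card (sub C) \<ge> l"
proof -
  define good where "good = {c \<in> C. (C - {c}) \<inter> B1 \<noteq> {}}"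
  have inj: "inj_on (\<lambda>c. C - {c}) good"
    by (rule inj_onI) (auto simp: good_def)
  have cs: "card (sub C) = card good" unfolding sub_def good_def[symmetric] using card_image[OF inj] .
  obtain a where a: "a \<in> C \<inter> B1" using C by auto
  have g1: "C - {a} \<subseteq> good" unfolding good_def using a by auto
  have fg: "finite good" using C unfolding good_def by auto
  have "card (C - {a}) = l - 1" using C a by simp
  then show "card (sub C) \<ge> l - 1" using cs card_mono[OF fg g1] by simp
  assume c2: "card (C \<inter> B1) \<ge> 2"
  have "good = C"
  proof -
    have "(C - {c}) \<inter> B1 \<noteq> {}" if "c \<in> C" for c
    proof
      assume "(C - {c}) \<inter> B1 = {}"
      then have "C \<inter> B1 \<subseteq> {c}" by auto
      then have "card (C \<inter> B1) \<le> 1" using card_mono[of "{c}" "C \<inter> B1"] by simp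
      then show False using c2 by simp
    qed
    then show ?thesis unfolding good_def by auto
  qed
  then show "card (sub C) \<ge> l" using cs C by simp
qed

lemma sub_Sig: assumes "B \<in> G" "B \<noteq> B1" shows "sub (X - B) \<subseteq> Sig"
proof
  fix S assume "S \<in> sub (X - B)"
  then obtain c where c: "c \<in> X - B" "S = (X - B) - {c}" "S \<inter> B1 \<noteq> {}" unfolding sub_def by auto
  have "card S = l - 1" using c compl[OF assms] by simp
  then show "S \<in> Sig" unfolding Sig_def using c assms by auto
qed

lemma sub_int: assumes "finite C" "card C = l" "finite C'" "card C' = l" "C \<noteq> C'"
  shows "sub C \<inter> sub C' \<subseteq> {C \<inter> C'}"
proof
  fix S assume S: "S \<in> sub C \<inter> sub C'"
  then obtain c c' where c: "c \<in> C" "S = C - {c}" "c' \<in> C'" "S = C' - {c'}" unfolding sub_def by auto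
  have sS: "S \<subseteq> C \<inter> C'" using c by auto
  have cS: "card S = l - 1" using c assms by simp
  have "C \<inter> C' \<noteq> C" proof
    assume "C \<inter> C' = C" then have "C \<subseteq> C'" by blast
    then show False using card_subset_eq[OF assms(3)] assms by simp
  qed
  then have "card (C \<inter> C') < l" using psubset_card_mono[of C "C \<inter> C'"] assms by blast
  moreover have "card S \<le> card (C \<inter> C')" using card_mono[OF _ sS] assms by simp
  ultimately have "card S = card (C \<inter> C')" using cS by linarith
  then have "S = C \<inter> C'" using card_subset_eq[OF _ sS] assms by simp
  then show "S \<in> {C \<inter> C'}" by simp
qed

lemma sub_B1: "S \<in> sub C \<Longrightarrow> S \<inter> B1 \<noteq> {}" unfolding sub_def by auto

lemma Sig_card: assumes "l \<ge> 3" "card G \<ge> 3" shows "card Sig \<ge> l + 1"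
proof -
  have fS: "finite Sig" using finite_subset[of Sig "Pow X"] finX unfolding Sig_def by auto
  have key: "card Sig \<ge> l + 1" if B2: "B2 \<in> G" "B2 \<noteq> B1" and B3: "B3 \<in> G" "B3 \<noteq> B1" "B3 \<noteq> B2"
     and cond: "card (sub (X - B2)) + card (sub (X - B3)) \<ge> 2*l - 2 + card (sub (X - B2) \<inter> sub (X - B3))"
    for B2 B3
  proof -
    have u: "sub (X - B2) \<union> sub (X - B3) \<subseteq> Sig" using sub_Sig B2 B3 by auto
    have f2: "finite (sub (X - B2))" "finite (sub (X - B3))" using u fS finite_subset by blast+
    have "card (sub (X - B2) \<union> sub (X - B3)) + card (sub (X - B2) \<inter> sub (X - B3)) =
          card (sub (X - B2)) + card (sub (X - B3))" using card_Un_Int[OF f2] by simp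
    then have "card (sub (X - B2) \<union> sub (X - B3)) \<ge> 2*l - 2" using cond by linarith
    then show ?thesis using card_mono[OF fS u] assms by linarith
  qed
  obtain B2 where B2: "B2 \<in> G" "B2 \<noteq> B1" using cardG
    proof -
    have "G - {B1} \<noteq> {}"
    proof
      assume "G - {B1} = {}" then have "G \<subseteq> {B1}" by blast
      then show False using card_mono[of "{B1}" G] cardG by simp
    qed
    then show ?thesis using that by blast
  qed
  note c2 = compl[OF B2]
  have ne: "X - B2 \<noteq> X - B3" if "B3 \<in> G" "B3 \<noteq> B2" for B3
    using GB[OF that(1)] GB[OF B2(1)] that(2) by blast
  show ?thesis
  proof (cases "card ((X - B2) \<inter> B1) \<ge> 2")
    case True
    have "card (G - {B1, B2}) \<ge> 1" using assms cardG B1 B2 by (simp add: card_Diff_subset)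
    then have "G - {B1, B2} \<noteq> {}" by (intro notI) simp
    then obtain B3 where B3: "B3 \<in> G" "B3 \<noteq> B1" "B3 \<noteq> B2" by blast
    note c3 = compl[OF B3(1,2)]
    have "card (sub (X - B2)) \<ge> l" using sub_card(2)[OF c2(4) c2(2) c2(3) True] .
    moreover have "card (sub (X - B3)) \<ge> l - 1" using sub_card(1)[OF c3(4) c3(2) c3(3)] .
    moreover have "card (sub (X - B2) \<inter> sub (X - B3)) \<le> 1"
      using sub_int[OF c2(4) c2(2) c3(4) c3(2) ne[OF B3(1,3)]] using card_mono[of "{(X - B2) \<inter> (X - B3)}"] by simp
    ultimately show ?thesis using key[OF B2 B3] assms by linarith
  next
    case False
    have "card ((X - B2) \<inter> B1) \<noteq> 0" using c2 B1p by auto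
    then have "card ((X - B2) \<inter> B1) = 1" using False by linarith
    then obtain a where a: "(X - B2) \<inter> B1 = {a}" using card_1_singletonE by blast
    have "a \<in> B1" using a by auto
    then have "card (B1 - {a}) \<ge> 1" using B1p kl by simp
    then have "B1 - {a} \<noteq> {}" by (intro notI) simp
    then obtain b where b: "b \<in> B1" "b \<noteq> a" by blast
    define B3 where "B3 = Bf b"
    have bB3: "b \<notin> B3" "B3 \<in> G" using Bf B3_def by auto
    have bB2: "b \<in> B2" using a b B1p by auto
    have B3: "B3 \<in> G" "B3 \<noteq> B1" "B3 \<noteq> B2" using bB3 bB2 b by auto
    note c3 = compl[OF B3(1,2)]
    have s2: "card (sub (X - B2)) \<ge> l - 1" using sub_card(1)[OF c2(4) c2(2) c2(3)] .
    show ?thesis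
    proof (cases "a \<in> X - B3")
      case True
      have "{a, b} \<subseteq> (X - B3) \<inter> B1" using True b bB3 B1p a by auto
      then have "card ((X - B3) \<inter> B1) \<ge> 2" using b card_mono[of "(X - B3) \<inter> B1" "{a,b}"] c3(4) by auto
      then have "card (sub (X - B3)) \<ge> l" using sub_card(2)[OF c3(4) c3(2) c3(3)] by simp
      moreover have "card (sub (X - B2) \<inter> sub (X - B3)) \<le> 1"
        using sub_int[OF c2(4) c2(2) c3(4) c3(2) ne[OF B3(1,3)]] using card_mono[of "{(X - B2) \<inter> (X - B3)}"] by simp
      ultimately show ?thesis using key[OF B2 B3] s2 assms by linarith
    next
      case False
      have "sub (X - B2) \<inter> sub (X - B3) = {}"
      proof (rule ccontr)
        assume "sub (X - B2) \<inter> sub (X - B3) \<noteq> {}"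
        then obtain S where S: "S \<in> sub (X - B2)" "S \<in> sub (X - B3)" by auto
        then have "S = (X - B2) \<inter> (X - B3)" using sub_int[OF c2(4) c2(2) c3(4) c3(2) ne[OF B3(1,3)]] by auto
        moreover have "S \<inter> B1 \<noteq> {}" using sub_B1 S by auto
        ultimately show False using a False by auto
      qed
      moreover have "card (sub (X - B3)) \<ge> l - 1" using sub_card(1)[OF c3(4) c3(2) c3(3)] .
      ultimately show ?thesis using key[OF B2 B3] s2 assms by simp
    qed
  qed
qed

lemma ex2: assumes "k = l" "card G \<ge> 3"
  shows "\<exists>A. A \<in> Bad \<and> A \<inter> B1 \<noteq> {} \<and> card (A \<inter> X) = l - 1 \<and> A \<notin> psi ` Q"
proof -
  have l3: "l \<ge> 3" using assms kl by simp
  define Ts where "Ts = {T. T \<subseteq> B1 \<and> card T = l - 1}"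
  define Im where "Im = psitr ` Ts"
  have fTs: "finite Ts" using B1p(3) finite_subset[of Ts "Pow B1"] unfolding Ts_def by auto
  have "card Ts = l choose (l - 1)" using n_subsets[OF B1p(3)] B1p unfolding Ts_def by simp
  also have "\<dots> = l" using binomial_symmetric[of "l - 1" l] l3 by simp
  finally have "card Im \<le> l" unfolding Im_def using card_image_le[OF fTs, of psitr] by simp
  then have lt: "card Im < card Sig" using Sig_card[OF l3 assms(2)] by simp
  have fIm: "finite Im" unfolding Im_def using fTs by simp
  have "\<not> Sig \<subseteq> Im"
  proof
    assume "Sig \<subseteq> Im" then have "card Sig \<le> card Im" using card_mono[OF fIm] by blast
    then show False using lt by simp
  qed
  then obtain S where S: "S \<in> Sig" "S \<notin> Im" by blast
  have "card Z \<ge> 1" using finX kl by simp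
  then have "Z \<noteq> {}" by (intro notI) simp
  then obtain z where z: "z \<in> Z" by blast
  obtain B where B: "B \<in> G" "S \<inter> B = {}" and Sp: "S \<subseteq> X" "card S = l - 1" "S \<inter> B1 \<noteq> {}"
    using S unfolding Sig_def by auto
  define A where "A = insert z S"
  have zX: "z \<notin> X" "z \<in> U" using z unfolding Z_def by auto
  have fS: "finite S" using Sp finX finite_subset by blast
  have AX: "A \<inter> X = S" using zX Sp unfolding A_def by auto
  have zS: "z \<notin> S" using zX Sp by auto
  have "card A = k" unfolding A_def using card_insert_disjoint[OF fS zS] Sp l3 assms(1) by simp
  moreover have "A \<subseteq> U" unfolding A_def using zX Sp finX by auto
  ultimately have AK: "A \<in> K" unfolding K_def by auto
  moreover have "A \<inter> B = {}" using B GB[OF B(1)] zX unfolding A_def by auto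
  ultimately have "A \<in> Bad" using B unfolding Bad_def by auto
  moreover have "A \<inter> B1 \<noteq> {}" using Sp unfolding A_def by auto
  moreover have "card (A \<inter> X) = l - 1" using AX Sp by simp
  moreover have "A \<notin> psi ` Q"
  proof
    assume "A \<in> psi ` Q"
    then obtain A' where A': "A' \<in> Q" "A = psi A'" by auto
    have "psitr (A' \<inter> X) = S" using psiQ(3)[OF A'(1)] A'(2) AX by simp
    moreover have "card (A' \<inter> X) = l - 1" using psiQ(8)[OF A'(1)] A'(2) AX Sp by simp
    ultimately have "S \<in> Im" using psiQ(1)[OF A'(1)] unfolding Im_def Ts_def by auto
    then show False using S by simp
  qed
  ultimately show ?thesis by blast
qed

lemma binom2: assumes "0 < j" "j < r" shows "(r::nat) choose j \<ge> 2"
proof -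
  obtain r' where r1: "r = Suc r'" using assms by (cases r) auto
  obtain j' where r2: "j = Suc j'" using assms by (cases j) auto
  note r = r1 r2
  have "r choose j = (r' choose j') + (r' choose j)" using r by simp
  moreover have "r' choose j' \<ge> 1" "r' choose j \<ge> 1" using assms r by (simp_all add: Suc_leI)
  ultimately show ?thesis by simp
qed

lemma binle: "(n - 2*l) choose k \<le> (n - l) choose k"
proof -
  have XB: "X - B1 \<subseteq> U" "card (X - B1) = l" using finX B1p by (auto simp: card_Diff_subset)
  have "D X \<subseteq> D (X - B1)" unfolding D_def by auto
  moreover have "finite (D (X - B1))" using finK unfolding D_def by auto
  ultimately have "card (D X) \<le> card (D (X - B1))" by (rule card_mono[rotated])
  then show ?thesis using card_D[OF XB(1)] card_D[OF finX(3)] XB finX by simp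
qed

lemma main_count:
  "card Bad \<ge> card (D B1) + card Q + (card G - 2) + (if card G \<ge> 3 then 1 else 0)"
proof -
  define c where "c = (n - 2*l) choose (k - l)"
  define P where "P A \<longleftrightarrow> A \<in> Bad \<and> A \<inter> B1 \<noteq> {} \<and> card (A \<inter> X) = l - 1 \<and> A \<notin> psi ` Q" for A
  define A0 where "A0 = (SOME A. P A)"
  define Y4 where "Y4 = (if k = l \<and> card G \<ge> 3 then {A0} else {})"
  have A0: "P A0" if "k = l" "card G \<ge> 3"
    unfolding A0_def by (rule someI_ex) (use ex2[OF that] in \<open>simp add: P_def\<close>)
  have Y4p: "P A" if "A \<in> Y4" for A
  proof (cases "k = l \<and> card G \<ge> 3")
    case True then show ?thesis using that A0 unfolding Y4_def by simp
  next
    case False then show ?thesis using that unfolding Y4_def by (simp only: if_False) simp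
  qed
  have cY4: "card Y4 = (if k = l \<and> card G \<ge> 3 then 1 else 0)" unfolding Y4_def by simp
  have s1: "D B1 \<subseteq> Bad" using B1 unfolding D_def Bad_def by auto
  have s2: "psi ` Q \<subseteq> Bad" using psiQ(5) by auto
  have s3: "Xtra \<subseteq> Bad" using Xtra_props(1) by auto
  have s4: "Y4 \<subseteq> Bad" using Y4p unfolding P_def by auto
  have fB: "finite Bad" using finK unfolding Bad_def by auto
  have f1: "finite (D B1)" using s1 fB by (rule finite_subset)
  have f2: "finite (psi ` Q)" using s2 fB by (rule finite_subset)
  have f3: "finite Xtra" using s3 fB by (rule finite_subset)
  have f4: "finite Y4" unfolding Y4_def by simp
  have d12: "D B1 \<inter> psi ` Q = {}" using psiQ(6) unfolding D_def by auto
  have d13: "D B1 \<inter> Xtra = {}" using Xtra_props(2) unfolding D_def by auto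
  have d14: "D B1 \<inter> Y4 = {}" using Y4p unfolding D_def P_def by auto
  have d23: "psi ` Q \<inter> Xtra = {}" using Xtra_props(3) by auto
  have d24: "psi ` Q \<inter> Y4 = {}" using Y4p unfolding P_def by auto
  have d34: "Xtra \<inter> Y4 = {}"
  proof (rule ccontr)
    assume "Xtra \<inter> Y4 \<noteq> {}"
    then obtain A where A: "A \<in> Xtra" "A \<in> Y4" by blast
    have "card (A \<inter> X) = l" using Xtra_props(4)[OF A(1)] .
    moreover have "card (A \<inter> X) = l - 1" using Y4p[OF A(2)] unfolding P_def by simp
    ultimately have "l = l - 1" by simp
    then show False using kl by simp
  qed
  have c12: "card (D B1 \<union> psi ` Q) = card (D B1) + card (psi ` Q)"
    by (rule card_Un_disjoint[OF f1 f2 d12])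
  have c123: "card ((D B1 \<union> psi ` Q) \<union> Xtra) = card (D B1 \<union> psi ` Q) + card Xtra"
    by (rule card_Un_disjoint) (use f1 f2 f3 d13 d23 in auto)
  have c1234: "card ((D B1 \<union> psi ` Q \<union> Xtra) \<union> Y4) = card (D B1 \<union> psi ` Q \<union> Xtra) + card Y4"
    by (rule card_Un_disjoint) (use f1 f2 f3 f4 d14 d24 d34 in auto)
  have "card (D B1 \<union> psi ` Q \<union> Xtra \<union> Y4) \<le> card Bad"
    by (rule card_mono[OF fB]) (use s1 s2 s3 s4 in auto)
  moreover have "card (psi ` Q) = card Q" using card_image[OF psi_inj] .
  moreover have "card Xtra + card Y4 \<ge> (card G - 2) + (if card G \<ge> 3 then 1 else 0)"
  proof (cases "k = l")
    case True
    then have "c = 1" unfolding c_def by simp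
    then have "card Xtra \<ge> card G - 2" using card_Xtra unfolding c_def by simp
    then show ?thesis using cY4 True by auto
  next
    case False
    then have "c \<ge> 2" unfolding c_def using binom2[of "k - l" "n - 2*l"] kl by simp
    then have "(card G - 2) * c \<ge> (card G - 2) * 2" by simp
    then have "card Xtra \<ge> (card G - 2) * 2" using card_Xtra unfolding c_def by linarith
    then show ?thesis by auto
  qed
  ultimately show ?thesis using c12 c123 c1234 by linarith
qed

lemma final:
  assumes F: "F \<subseteq> {A. A \<subseteq> {1..n} \<and> card A = k}" and ci: "cross_intersecting F G"
  shows "int (card F) + int (card G) + (if card G \<ge> 3 then 1 else 0) \<le> h n k l"
proof -
  have "F \<subseteq> K - Bad" using F ci unfolding K_def Bad_def U_def cross_intersecting_def by auto
  then have "card F \<le> card (K - Bad)" using finK by (intro card_mono) auto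
  also have "\<dots> = card K - card Bad" using finK by (intro card_Diff_subset) (auto simp: Bad_def)
  finally have cF: "card F \<le> card K - card Bad" .
  have "Bad \<subseteq> K" unfolding Bad_def by auto
  then have "card Bad \<le> card K" using finK card_mono by blast
  then have "int (card F) \<le> int (card K) - int (card Bad)" using cF by linarith
  moreover have q: "card Q + ((n - 2*l) choose k) = (n - l) choose k" using card_Q binle by simp
  moreover have "card Bad + 2 \<ge> card (D B1) + card Q + card G + (if card G \<ge> 3 then 1 else 0)"
    using main_count cardG(1) by linarith
  then have "int (card Bad) + 2 \<ge> int ((n - l) choose k) + int (card Q) + int (card G) + (if card G \<ge> 3 then 1 else 0)"
    using card_DB1 by (auto split: if_splits)
  moreover have "int (card Q) + int ((n - 2*l) choose k) = int ((n - l) choose k)" using q by (metis of_nat_add)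
  ultimately show ?thesis unfolding h_def using finK(2) by (auto split: if_splits)
qed

end

theorem proposition4p3:
  fixes n k l :: nat and F G :: "nat set set"
  assumes "k \<ge> l" "l \<ge> 2" "k \<ge> 3" "n > k + l"
    and "F \<subseteq> {A. A \<subseteq> {1..n} \<and> card A = k}"
    and "G \<subseteq> {B. B \<subseteq> {1..2*l} \<and> card B = l}"
    and "non_trivial F" "non_trivial G"
    and "cross_intersecting F G"
  shows "int (card F) + int (card G) \<le> h n k l \<and>
         (card G \<noteq> 2 \<longrightarrow> int (card F) + int (card G) < h n k l)"
proof -
  obtain B1 where B1: "B1 \<in> G" using assms(8) unfolding non_trivial_def by auto
  interpret pset n k l G B1 using assms B1 by unfold_locales auto
  have f: "int (card F) + int (card G) + (if card G \<ge> 3 then 1 else 0) \<le> h n k l"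
    using final[OF assms(5,9)] .
  have "card G \<ge> 2" using cardG(1) .
  then show ?thesis using f by (auto split: if_splits)
qed

end
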